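(* Let $b,w,n$ be positive integers. There exists a coupling $(X,Y)$ with $X\sim\mathrm{Pclas}(b,w,n)$ and $Y\sim\mathrm{Beta}(w,b)$ such that almost surely $$|X-nY|<\frac{b(4w+b+1)}{2}.$$
   Context: $\mathrm{Pclas}(b,w,n)$ denotes the distribution of the number of white balls in a classical Pólya urn after $n$ completed draws, starting with $b$ black and $w$ white balls: at each draw a uniformly random ball is drawn and returned together with one additional ball of the same color. $\mathrm{Beta}(a,b)$ has density proportional to $x^{a-1}(1-x)^{b-1}$ on $(0,1)$. *)

theory Defs
  imports "HOL-Probability.Probability"
begin

text \<open>Classical Polya urn: distribution of the number of white balls in the urn
after n completed draws, starting with b black and w white balls.
After k draws the urn contains b + w + k balls.\<close>
fun Pclas :: "nat \<Rightarrow> nat \<Rightarrow> nat \<Rightarrow> nat pmf" where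
  "Pclas b w 0 = return_pmf w"
| "Pclas b w (Suc n) =
     bind_pmf (Pclas b w n)
       (\<lambda>k. map_pmf (\<lambda>c. if c then Suc k else k)
              (bernoulli_pmf (real k / real (b + w + n))))"

definition beta_density :: "real \<Rightarrow> real \<Rightarrow> real \<Rightarrow> real" where
  "beta_density a b x =
     (if 0 < x \<and> x < 1 then x powr (a - 1) * (1 - x) powr (b - 1) / Beta a b else 0)"

definition Beta_distr :: "real \<Rightarrow> real \<Rightarrow> real measure" where
  "Beta_distr a b = density lborel (\<lambda>x. ennreal (beta_density a b x))"

end

theory Submission
  imports Defs
begin


lemma Pclas_support: "x \<in> set_pmf (Pclas b w n) \<Longrightarrow> w \<le> x \<and> x \<le> w + n"
proof (induction n arbitrary: x)
  case (Suc n)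
  then show ?case by (force split: if_splits)
qed simp

lemma pmf_Pclas_out: "\<not> (w \<le> x \<and> x \<le> w + n) \<Longrightarrow> pmf (Pclas b w n) x = 0"
  using Pclas_support by (meson pmf_eq_0_set_pmf)

lemma pmf_map_bern:
  assumes "0 \<le> q" "q \<le> 1"
  shows "pmf (map_pmf (\<lambda>c. if c then Suc a else a) (bernoulli_pmf q)) y =
     (if y = Suc a then q else 0) + (if y = a then 1 - q else 0)"
proof -
  have "map_pmf (\<lambda>c. if c then Suc a else a) (bernoulli_pmf q) =
        bind_pmf (bernoulli_pmf q) (\<lambda>c. return_pmf (if c then Suc a else a))"
    by (simp add: map_pmf_def)
  then show ?thesis using assms
    by (simp add: pmf_bind integral_bernoulli_pmf indicator_def)
qed

lemma pmf_Pclas_Suc: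
  "pmf (Pclas b w (Suc n)) y =
     (if y = 0 then 0 else pmf (Pclas b w n) (y - 1) * (real (y-1) / real (b+w+n)))
     + pmf (Pclas b w n) y * (1 - real y / real (b+w+n))"
proof -
  let ?p = "Pclas b w n"
  let ?A = "{w..w+n}"
  let ?q = "\<lambda>a::nat. real a / real (b+w+n)"
  have q: "a \<in> ?A \<Longrightarrow> 0 \<le> ?q a \<and> ?q a \<le> 1" for a
    by (cases "b+w+n = 0") (auto simp: divide_simps)
  have "pmf (Pclas b w (Suc n)) y =
     (\<Sum>a\<in>?A. pmf (map_pmf (\<lambda>c. if c then Suc a else a) (bernoulli_pmf (?q a))) y * pmf ?p a)"
    by (simp add: pmf_bind, subst integral_measure_pmf_real[where A="?A"])
       (auto dest: Pclas_support)
  also have "\<dots> = (\<Sum>a\<in>?A. ((if y = Suc a then ?q a else 0) + (if y = a then 1 - ?q a else 0)) * pmf ?p a)"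
    by (intro sum.cong refl, subst pmf_map_bern) (use q in auto)
  also have "\<dots> = (\<Sum>a\<in>?A. (if a = y - 1 \<and> y \<noteq> 0 then ?q a * pmf ?p a else 0))
                 + (\<Sum>a\<in>?A. (if a = y then (1 - ?q a) * pmf ?p a else 0))"
    by (subst sum.distrib[symmetric], intro sum.cong refl) auto
  also have "\<dots> = (if y = 0 then 0 else pmf ?p (y - 1) * ?q (y-1)) + pmf ?p y * (1 - ?q y)"
    using pmf_Pclas_out[of w "y-1" n b] pmf_Pclas_out[of w y n b]
    by (auto simp: sum.delta')
  finally show ?thesis by simp
qed

definition Fc :: "nat \<Rightarrow> nat \<Rightarrow> nat \<Rightarrow> nat \<Rightarrow> real" where
  "Fc w b n k = (\<Sum>x\<le>k. pmf (Pclas b w n) x)"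

lemma Fc_n_rec:
  "Fc w b (Suc n) k = real k / real (b+w+n) * Fc w b n (k-1)
      + (1 - real k / real (b+w+n)) * Fc w b n k"
proof (induction k)
  case 0
  then show ?case by (simp add: Fc_def pmf_Pclas_Suc del: Pclas.simps)
next
  case (Suc k)
  let ?T = "real (b+w+n)"
  have e1: "Fc w b (Suc n) (Suc k) = Fc w b (Suc n) k + pmf (Pclas b w (Suc n)) (Suc k)"
    by (simp add: Fc_def)
  have e2: "Fc w b n (Suc k) = Fc w b n k + pmf (Pclas b w n) (Suc k)"
    by (simp add: Fc_def)
  have e3: "real k / ?T * Fc w b n k = real k / ?T * Fc w b n (k-1) + real k / ?T * pmf (Pclas b w n) k"
    by (cases k) (simp_all add: Fc_def algebra_simps)
  have e4: "real (Suc k) / ?T = real k / ?T + 1 / ?T" by (simp add: add_divide_distrib)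
  show ?case
    unfolding e1 e2 Suc pmf_Pclas_Suc[of b w n "Suc k"] e4
    using e3 by (simp add: algebra_simps)
qed

lemma Fc_0: "Fc w b 0 k = (if w \<le> k then 1 else 0)"
  by (simp add: Fc_def pmf_return indicator_def sum.delta)

lemma D_rec_alg:
  fixes M j A B C D P Q X Y :: real
  assumes "M > 0"
    and "X = j/M * A + (1 - j/M) * C" "Y = (j+1)/M * B + (1 - (j+1)/M) * D"
    and "P = j/M * A + (1 - j/M) * B" "Q = (j+1)/M * C + (1 - (j+1)/M) * D"
  shows "(j+1)/(M+1) * X + (1 - (j+1)/(M+1)) * Y = (j+1)/(M+1) * P + (1 - (j+1)/(M+1)) * Q"
proof -
  have h: "M \<noteq> 0" "M + 1 \<noteq> 0" using assms by auto
  show ?thesis unfolding assms(2-5) using h by (simp add: divide_simps) (simp add: algebra_simps)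
qed

lemma Fc_D_rec:
  assumes "w \<ge> 1" "b \<ge> 1"
  shows "Fc w b n k = real k / real (n+w+b-1) * Fc (w-1) b n (k-1)
      + (1 - real k / real (n+w+b-1)) * Fc w (b-1) n k"
  using assms
proof (induction n arbitrary: k)
  case 0
  show ?case
  proof (cases "w \<le> k")
    case True
    then show ?thesis using 0 by (simp add: Fc_0 algebra_simps)
  next
    case False
    then show ?thesis using 0 by (cases k) (auto simp: Fc_0)
  qed
next
  case (Suc n)
  obtain w' b' where w: "w = Suc w'" and b: "b = Suc b'" using Suc.prems
    by (metis Suc_le_D One_nat_def)
  show ?case
  proof (cases k)
    case 0
    have "Fc w b (Suc n) 0 = Fc w b n 0" "Fc w (b-1) (Suc n) 0 = Fc w (b-1) n 0"
      using Fc_n_rec[of w b n 0] Fc_n_rec[of w "b-1" n 0] by simp_all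
    then show ?thesis using Suc.IH[of 0] Suc.prems 0
      by simp
  next
    case (Suc j)
    have r1: "Fc w b (Suc n) k = real k / real (b+w+n) * Fc w b n j
      + (1 - real k / real (b+w+n)) * Fc w b n k"
      using Fc_n_rec[of w b n k] Suc by simp
    have r2: "Fc (w-1) b (Suc n) j = real j / real (b+(w-1)+n) * Fc (w-1) b n (j-1)
      + (1 - real j / real (b+(w-1)+n)) * Fc (w-1) b n j"
      using Fc_n_rec[of "w-1" b n j] by simp
    have r3: "Fc w (b-1) (Suc n) k = real k / real ((b-1)+w+n) * Fc w (b-1) n j
      + (1 - real k / real ((b-1)+w+n)) * Fc w (b-1) n k"
      using Fc_n_rec[of w "b-1" n k] Suc by simp
    have d1: "Fc w b n j = real j / real (n+w+b-1) * Fc (w-1) b n (j-1)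
      + (1 - real j / real (n+w+b-1)) * Fc w (b-1) n j"
      using Suc.IH[of j] Suc.prems by simp
    have d2: "Fc w b n k = real k / real (n+w+b-1) * Fc (w-1) b n j
      + (1 - real k / real (n+w+b-1)) * Fc w (b-1) n k"
      using Suc.IH[of k] Suc.prems \<open>k = Suc j\<close> by simp
    have M: "real (b+(w-1)+n) = real (n+w+b-1)" "real ((b-1)+w+n) = real (n+w+b-1)"
      "real (b+w+n) = real (n+w+b-1) + 1" "real (Suc n+w+b-1) = real (n+w+b-1) + 1"
      "real k = real j + 1"
      using Suc.prems \<open>k = Suc j\<close> by auto
    have pos: "real (n+w+b-1) > 0" using Suc.prems by auto
    show ?thesis
      unfolding r1 using D_rec_alg[OF pos d1 d2[unfolded M(5)] r2[unfolded M] r3[unfolded M]]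
        Suc.prems \<open>k = Suc j\<close>
      by (simp add: of_nat_diff add_ac)
  qed
qed

lemma bernoulli_pmf_1': "bernoulli_pmf 1 = return_pmf True"
  by (rule pmf_eqI) (simp add: pmf_return indicator_def split: bool.splits)

lemma bernoulli_pmf_0': "bernoulli_pmf 0 = return_pmf False"
  by (rule pmf_eqI) (simp add: pmf_return indicator_def split: bool.splits)

lemma Pclas_w0: "Pclas b 0 n = return_pmf 0"
  by (induction n) (simp_all add: bernoulli_pmf_0' bind_return_pmf)

lemma Pclas_b0: "w > 0 \<Longrightarrow> Pclas 0 w n = return_pmf (w+n)"
  by (induction n) (simp_all add: bernoulli_pmf_1' bind_return_pmf)

lemma Fc_w0: "Fc 0 b n k = 1"
  by (simp add: Fc_def Pclas_w0 pmf_return indicator_def sum.delta)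

lemma Fc_b0: "w > 0 \<Longrightarrow> Fc w 0 n k = (if w + n \<le> k then 1 else 0)"
  by (simp add: Fc_def Pclas_b0 pmf_return indicator_def sum.delta)

lemma Fc_prob: "Fc w b n k = measure_pmf.prob (Pclas b w n) {..k}"
  by (simp add: Fc_def measure_measure_pmf_finite)

lemma Fc_nonneg: "0 \<le> Fc w b n k"
  by (simp add: Fc_prob)

lemma Fc_le1: "Fc w b n k \<le> 1"
  by (simp add: Fc_prob)

lemma Fc_mono: "j \<le> k \<Longrightarrow> Fc w b n j \<le> Fc w b n k"
  unfolding Fc_prob by (intro measure_pmf.finite_measure_mono) auto

lemma Fc_one: "w + n \<le> k \<Longrightarrow> Fc w b n k = 1"
  unfolding Fc_def by (rule sum_pmf_eq_1) (auto dest: Pclas_support)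

fun bt :: "nat \<Rightarrow> real \<Rightarrow> nat \<Rightarrow> real" where
  "bt 0 p w = (if w = 0 then 1 else 0)"
| "bt (Suc r) p w = (if w = 0 then 1 else p * bt r p (w-1) + (1-p) * bt r p w)"

lemma bt_bounds: "0 \<le> p \<Longrightarrow> p \<le> 1 \<Longrightarrow> 0 \<le> bt r p w \<and> bt r p w \<le> 1"
proof (induction r arbitrary: w)
  case (Suc r)
  then show ?case
    using Suc.IH[of "w-1"] Suc.IH[of w]
    by (auto intro!: add_nonneg_nonneg mult_nonneg_nonneg convex_bound_le[where x="bt r p (w-1)" and y="bt r p w" and a=1 and u=p and v="1-p", simplified])
qed simp

lemma bt_w0[simp]: "bt r p 0 = 1"
  by (cases r) auto

lemma bt_big: "r < w \<Longrightarrow> bt r p w = 0"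
  by (induction r arbitrary: w) auto

lemma bt_anti: "0 \<le> p \<Longrightarrow> p \<le> 1 \<Longrightarrow> bt r p (Suc w) \<le> bt r p w"
proof (induction r arbitrary: w)
  case (Suc r)
  show ?case
  proof (cases w)
    case 0
    then show ?thesis using bt_bounds[OF Suc.prems, of "Suc r" "Suc w"] by simp
  next
    case (Suc v)
    have "bt r p w \<le> bt r p v" "bt r p (Suc w) \<le> bt r p w" using Suc.IH Suc.prems Suc by auto
    then show ?thesis using Suc Suc.prems
      by (simp add: add_mono mult_left_mono)
  qed
qed simp

lemma upper_dom:
  assumes "0 \<le> p" "p \<le> 1" "real k \<le> p * real n"
  shows "Fc w b n k \<le> bt (w+b-1) p w"
  using assms
proof (induction "w+b" arbitrary: w b k rule: less_induct)
  case less
  show ?case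
  proof (cases "w = 0")
    case True
    then show ?thesis by (simp add: Fc_w0)
  next
    case w: False
    show ?thesis
    proof (cases "b = 0")
      case True
      have "real k \<le> real n" using less.prems
        by (metis mult_left_le_one_le of_nat_0_le_iff order_trans)
      then show ?thesis using True w by (simp add: Fc_b0 bt_big)
    next
      case b: False
      define M where "M = real (n+w+b-1)"
      define q where "q = real k / M"
      have Mpos: "M \<ge> 1" using w b by (simp add: M_def)
      have kn: "real k \<le> real n" using less.prems
        by (metis mult_left_le_one_le of_nat_0_le_iff order_trans)
      have nM: "real n \<le> M" using w b by (simp add: M_def)
      have q01: "0 \<le> q" "q \<le> 1" using kn nM Mpos by (auto simp: q_def divide_simps)
      have qp: "q \<le> p"
      proof -
        have "real k \<le> p * M" using less.prems(3) nM less.prems(1)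
          by (meson mult_left_mono order_trans)
        then show ?thesis using Mpos by (simp add: q_def divide_simps mult.commute)
      qed
      have F1: "Fc (w-1) b n (k-1) \<le> bt (w-1+b-1) p (w-1)"
      proof -
        have "real (k-1) \<le> p * real n" using less.prems(3) by (cases k) auto
        moreover have "w - 1 + b < w + b" using w by simp
        ultimately show ?thesis using less.hyps[of "w-1" b "k-1"] less.prems(1,2) by blast
      qed
      have F2: "Fc w (b-1) n k \<le> bt (w+(b-1)-1) p w"
        using less.hyps[of w "b-1" k] less.prems w b by simp
      have K: "w+b-1 = Suc (w+b-2)" "w-1+b-1 = w+b-2" "w+(b-1)-1 = w+b-2" using w b by auto
      have AB: "bt (w+b-2) p w \<le> bt (w+b-2) p (w-1)"
        using bt_anti[OF less.prems(1,2), of "w+b-2" "w-1"] w by simp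
      have "Fc w b n k = q * Fc (w-1) b n (k-1) + (1 - q) * Fc w (b-1) n k"
        using Fc_D_rec[of w b n k] w b by (simp add: q_def M_def)
      also have "\<dots> \<le> q * bt (w+b-2) p (w-1) + (1-q) * bt (w+b-2) p w"
        using F1 F2 q01 K by (intro add_mono mult_left_mono) auto
      also have "\<dots> = bt (w+b-2) p w + q * (bt (w+b-2) p (w-1) - bt (w+b-2) p w)"
        by (simp add: algebra_simps)
      also have "\<dots> \<le> bt (w+b-2) p w + p * (bt (w+b-2) p (w-1) - bt (w+b-2) p w)"
        using qp AB by (intro add_left_mono mult_right_mono) auto
      also have "\<dots> = bt (w+b-1) p w"
        unfolding K(1) using w by (simp add: algebra_simps)
      finally show ?thesis .
    qed
  qed
qed

lemma lower_dom:
  assumes "0 \<le> p" "p \<le> 1"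
    and "p * (real n + real w + real b - 1) + (real w + real b - 1) \<le> real k"
  shows "bt (w+b-1) p w \<le> Fc w b n k"
  using assms
proof (induction "w+b" arbitrary: w b k rule: less_induct)
  case less
  show ?case
  proof (cases "w = 0")
    case True
    then show ?thesis using bt_bounds[OF less.prems(1,2)] by (simp add: Fc_w0)
  next
    case w: False
    show ?thesis
    proof (cases "b = 0")
      case True
      then show ?thesis using w Fc_nonneg by (simp add: bt_big)
    next
      case b: False
      show ?thesis
      proof (cases "w + n \<le> k")
        case True
        then show ?thesis using Fc_one bt_bounds[OF less.prems(1,2)] by simp
      next
        case False
        define M where "M = real (n+w+b-1)"
        define q where "q = real k / M"
        have Mpos: "M \<ge> 1" using w b by (simp add: M_def)
        have Mr: "M = real n + real w + real b - 1" using w b by (simp add: M_def)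
        have q01: "0 \<le> q" "q \<le> 1" using False Mpos by (auto simp: q_def divide_simps M_def)
        have k1: "real k \<ge> 1"
        proof -
          have "0 \<le> p * (real n + real w + real b - 1)" using less.prems(1) w b by simp
          then show ?thesis using less.prems(3) w b by linarith
        qed
        have qp: "p \<le> q"
        proof -
          have "p * M \<le> real k" using less.prems(3) Mr w b by simp
          then show ?thesis using Mpos by (simp add: q_def divide_simps mult.commute)
        qed
        have F1: "bt (w-1+b-1) p (w-1) \<le> Fc (w-1) b n (k-1)"
        proof -
          have "real (k-1) = real k - 1" using k1 by (cases k) auto
          then have "p * (real n + real (w-1) + real b - 1) + (real (w-1) + real b - 1) \<le> real (k-1)"
            using less.prems(1,3) w by (simp add: of_nat_diff algebra_simps)
          moreover have "w - 1 + b < w + b" using w by simp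
          ultimately show ?thesis using less.hyps[of "w-1" b "k-1"] less.prems(1,2) by blast
        qed
        have F2: "bt (w+(b-1)-1) p w \<le> Fc w (b-1) n k"
        proof -
          have "p * (real n + real w + real (b-1) - 1) + (real w + real (b-1) - 1) \<le> real k"
            using less.prems(1,3) b by (simp add: of_nat_diff algebra_simps)
          moreover have "w + (b - 1) < w + b" using b by simp
          ultimately show ?thesis using less.hyps[of w "b-1" k] less.prems(1,2) by blast
        qed
        have K: "w+b-1 = Suc (w+b-2)" "w-1+b-1 = w+b-2" "w+(b-1)-1 = w+b-2" using w b by auto
        have AB: "bt (w+b-2) p w \<le> bt (w+b-2) p (w-1)"
          using bt_anti[OF less.prems(1,2), of "w+b-2" "w-1"] w by simp
        have "bt (w+b-1) p w = bt (w+b-2) p w + p * (bt (w+b-2) p (w-1) - bt (w+b-2) p w)"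
          unfolding K(1) using w by (simp add: algebra_simps)
        also have "\<dots> \<le> bt (w+b-2) p w + q * (bt (w+b-2) p (w-1) - bt (w+b-2) p w)"
          using qp AB by (intro add_left_mono mult_right_mono) auto
        also have "\<dots> = q * bt (w+b-2) p (w-1) + (1-q) * bt (w+b-2) p w"
          by (simp add: algebra_simps)
        also have "\<dots> \<le> q * Fc (w-1) b n (k-1) + (1 - q) * Fc w (b-1) n k"
          using F1 F2 q01 K by (intro add_mono mult_left_mono) auto
        also have "\<dots> = Fc w b n k"
          using Fc_D_rec[of w b n k] w b by (simp add: q_def M_def)
        finally show ?thesis .
      qed
    qed
  qed
qed



definition pb :: "nat \<Rightarrow> real \<Rightarrow> nat \<Rightarrow> real" where
  "pb r y j = real (r choose j) * y ^ j * (1 - y) ^ (r - j)"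

lemma pb_rec: "y * pb r y u + (1 - y) * pb r y (Suc u) = pb (Suc r) y (Suc u)"
proof (cases "u < r")
  case True
  then have e: "r - u = Suc (r - Suc u)" by simp
  show ?thesis unfolding pb_def using True
    by (simp add: e algebra_simps)
next
  case False
  then have "r choose Suc u = 0" by simp
  then show ?thesis unfolding pb_def using False
    by (simp add: algebra_simps)
qed

lemma pb_0: "pb (Suc r) y 0 = (1 - y) * pb r y 0"
  by (simp add: pb_def)

lemma bt_diff: "bt r y v - bt r y (Suc v) = pb r y v"
proof (induction r arbitrary: v)
  case 0
  then show ?case by (simp add: pb_def)
next
  case (Suc r)
  show ?case
  proof (cases v)
    case 0
    have h: "pb r y 0 = 1 - bt r y (Suc 0)" using Suc.IH[of 0] by simp
    then show ?thesis using 0 by (simp add: pb_0 h algebra_simps)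
  next
    case (Suc u)
    have "bt (Suc r) y v - bt (Suc r) y (Suc v) = y * pb r y u + (1 - y) * pb r y (Suc u)"
      using Suc.IH[of u] Suc.IH[of "Suc u"] Suc by (simp add: algebra_simps)
    then show ?thesis using pb_rec Suc by simp
  qed
qed

definition Dbt :: "nat \<Rightarrow> nat \<Rightarrow> real \<Rightarrow> real" where
  "Dbt r w y = (if w = 0 then 0 else real r * pb (r - 1) y (w - 1))"

lemma pb_continuous: "continuous_on S (\<lambda>y. pb r y j)"
  unfolding pb_def by (intro continuous_intros)

lemma bt_deriv: "((\<lambda>y. bt r y w) has_real_derivative Dbt r w y) (at y)"
proof (induction r arbitrary: w)
  case 0
  then show ?case by (simp add: Dbt_def)
next
  case (Suc r)
  show ?case
  proof (cases w)
    case 0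
    then show ?thesis by (simp add: Dbt_def)
  next
    case (Suc v)
    have d: "((\<lambda>y. y * bt r y v + (1 - y) * bt r y (Suc v)) has_real_derivative
       (1 * bt r y v + y * Dbt r v y + ((-1) * bt r y (Suc v) + (1 - y) * Dbt r (Suc v) y))) (at y)"
      using DERIV_add[OF DERIV_mult[OF DERIV_ident Suc.IH[of v]]
          DERIV_mult[OF DERIV_diff[OF DERIV_const[of 1] DERIV_ident] Suc.IH[of "Suc v"]]]
      by (simp add: algebra_simps)
    have eq: "1 * bt r y v + y * Dbt r v y + ((-1) * bt r y (Suc v) + (1 - y) * Dbt r (Suc v) y)
        = Dbt (Suc r) (Suc v) y"
    proof -
      have "y * Dbt r v y + (1 - y) * Dbt r (Suc v) y = real r * pb r y v"
      proof (cases v)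
        case 0
        then show ?thesis by (cases r) (simp_all add: Dbt_def pb_0)
      next
        case (Suc u)
        show ?thesis
        proof (cases r)
          case 0
          then show ?thesis by (simp add: Dbt_def pb_def)
        next
          case (Suc r')
          have "y * Dbt r v y + (1 - y) * Dbt r (Suc v) y
              = real r * (y * pb r' y u + (1 - y) * pb r' y (Suc u))"
            using \<open>v = Suc u\<close> Suc by (simp add: Dbt_def algebra_simps)
          then show ?thesis using pb_rec[of y r' u] Suc \<open>v = Suc u\<close> by simp
        qed
      qed
      then show ?thesis using bt_diff[of r y v] by (simp add: Dbt_def algebra_simps)
    qed
    show ?thesis using d unfolding eq using Suc by simp
  qed
qed

lemma bt_at0: "w > 0 \<Longrightarrow> bt r 0 w = 0"
  by (induction r arbitrary: w) auto

lemma bt_at1: "w \<le> r \<Longrightarrow> bt r 1 w = 1"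
  by (induction r arbitrary: w) (auto simp: bt_big)

lemma bt_cont: "continuous_on S (\<lambda>y. bt r y w)"
  using bt_deriv by (meson DERIV_isCont continuous_at_imp_continuous_on)

lemma Dbt_pos: "1 \<le> w \<Longrightarrow> w \<le> r \<Longrightarrow> 0 < y \<Longrightarrow> y < 1 \<Longrightarrow> 0 < Dbt r w y"
  by (simp add: Dbt_def pb_def)

lemma bt_strict_mono:
  assumes "1 \<le> w" "w \<le> r" "0 \<le> x" "x < y" "y \<le> 1"
  shows "bt r x w < bt r y w"
proof (rule DERIV_pos_imp_increasing_open[OF assms(4)])
  fix t assume t: "x < t" "t < y"
  show "\<exists>d. ((\<lambda>a. bt r a w) has_real_derivative d) (at t) \<and> 0 < d"
    using bt_deriv[of r w t] Dbt_pos[of w r t] assms t by auto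
qed (rule bt_cont)

lemma bt_mono:
  assumes "1 \<le> w" "w \<le> r" "0 \<le> x" "x \<le> y" "y \<le> 1"
  shows "bt r x w \<le> bt r y w"
  using bt_strict_mono[OF assms(1,2,3) _ assms(5)] assms(4) by (cases "x = y") auto

lemma Beta_nat: "w \<ge> 1 \<Longrightarrow> b \<ge> 1 \<Longrightarrow>
   Beta (real w) (real b) = fact (w-1) * fact (b-1) / fact (w+b-1)"
proof -
  assume a: "w \<ge> 1" "b \<ge> 1"
  have g: "Gamma (real m) = fact (m - 1)" if "m \<ge> 1" for m
  proof -
    have "real m = 1 + real (m-1)" using that by simp
    then show ?thesis by (simp only: Gamma_fact)
  qed
  show ?thesis unfolding Beta_def using a g[of w] g[of b] g[of "w+b"]
    by (simp add: of_nat_add[symmetric] del: of_nat_add)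
qed

lemma Dbt_density:
  assumes "w \<ge> 1" "b \<ge> 1" "0 < t" "t < 1"
  shows "Dbt (w+b-1) w t = beta_density (real w) (real b) t"
proof -
  have K: "w+b-1-1 - (w-1) = b - 1" "w - 1 \<le> w+b-1-1" using assms by auto
  have c: "real (w+b-1) * real (w+b-1-1 choose (w-1)) = fact (w+b-1) / (fact (w-1) * fact (b-1))"
  proof -
    have "real (w+b-1-1 choose (w-1)) = fact (w+b-1-1) / (fact (w-1) * fact (b-1))"
      using binomial_fact[OF K(2)] K(1) by simp
    moreover have "real (w+b-1) * fact (w+b-1-1) = (fact (w+b-1) :: real)"
    proof -
      obtain m where m: "w+b-1 = Suc m" using assms by (cases "w+b-1") auto
      show ?thesis unfolding m by simp
    qed
    ultimately show ?thesis by (simp add: field_simps)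
  qed
  have p: "t powr (real w - 1) = t ^ (w-1)" "(1 - t) powr (real b - 1) = (1-t) ^ (b-1)"
    using assms by (simp_all add: powr_realpow[symmetric] of_nat_diff)
  have "Dbt (w+b-1) w t = (real (w+b-1) * real (w+b-1-1 choose (w-1))) * (t^(w-1) * (1-t)^(b-1))"
    using assms K(1) by (simp add: Dbt_def pb_def)
  also have "\<dots> = fact (w+b-1) / (fact (w-1) * fact (b-1)) * (t^(w-1) * (1-t)^(b-1))"
    by (simp only: c)
  also have "\<dots> = t^(w-1) * (1-t)^(b-1) / (fact (w-1) * fact (b-1) / fact (w+b-1))"
    by (simp add: divide_simps)
  also have "\<dots> = beta_density (real w) (real b) t"
    unfolding beta_density_def using assms p Beta_nat[OF assms(1,2)] by simp
  finally show ?thesis .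
qed



lemma beta_density_nonneg: "w \<ge> 1 \<Longrightarrow> b \<ge> 1 \<Longrightarrow> 0 \<le> beta_density (real w) (real b) x"
  unfolding beta_density_def using Beta_nat[of w b] by simp

lemma beta_density_meas[measurable]: "(\<lambda>x. ennreal (beta_density a b x)) \<in> borel_measurable borel"
  unfolding beta_density_def by measurable

lemma Beta_cdf:
  assumes "w \<ge> 1" "b \<ge> 1"
  shows "emeasure (Beta_distr (real w) (real b)) {..y} = ennreal (bt (w+b-1) (max 0 (min 1 y)) w)"
proof -
  define y' where "y' = max 0 (min 1 y)"
  let ?bd = "beta_density (real w) (real b)"
  have y': "0 \<le> y'" "y' \<le> 1" by (auto simp: y'_def)
  have ftc: "((\<lambda>t. Dbt (w+b-1) w t) has_integral (bt (w+b-1) y' w - bt (w+b-1) 0 w)) {0..y'}"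
  proof (rule fundamental_theorem_of_calculus[where f="\<lambda>t. bt (w+b-1) t w"])
    fix x assume "x \<in> {0..y'}"
    show "((\<lambda>t. bt (w+b-1) t w) has_vector_derivative Dbt (w+b-1) w x) (at x within {0..y'})"
      using bt_deriv[of "w+b-1" w x] unfolding has_real_derivative_iff_has_vector_derivative
      by (rule has_vector_derivative_at_within)
  qed (use y' in simp)
  have int: "(?bd has_integral bt (w+b-1) y' w) {0..y'}"
  proof (rule has_integral_spike_finite[where S="{0,1}"])
    show "((\<lambda>t. Dbt (w+b-1) w t) has_integral bt (w+b-1) y' w) {0..y'}"
      using ftc bt_at0[of w] assms by simp
    fix x assume "x \<in> {0..y'} - {0,1}"
    then show "?bd x = Dbt (w+b-1) w x" using Dbt_density[OF assms, of x] y' by auto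
  qed simp
  have "emeasure (Beta_distr (real w) (real b)) {..y} = (\<integral>\<^sup>+ x. ennreal (?bd x) * indicator {..y} x \<partial>lborel)"
    unfolding Beta_distr_def by (subst emeasure_density) (auto simp: beta_density_meas)
  also have "\<dots> = (\<integral>\<^sup>+ x. ennreal (indicator {0..y'} x * ?bd x) \<partial>lborel)"
  proof (intro nn_integral_cong)
    fix x :: real
    show "ennreal (?bd x) * indicator {..y} x = ennreal (indicator {0..y'} x * ?bd x)"
    proof (cases "0 < x \<and> x < 1")
      case True
      then have "(x \<in> {..y}) = (x \<in> {0..y'})" by (auto simp: y'_def)
      then show ?thesis by (simp add: indicator_def)
    next
      case False
      then have "?bd x = 0" unfolding beta_density_def by auto
      then show ?thesis by simp
    qed
  qed
  also have "\<dots> = ennreal (bt (w+b-1) y' w)"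
    by (rule nn_integral_has_integral_lebesgue[OF _ int]) (use beta_density_nonneg assms in auto)
  finally show ?thesis by (simp add: y'_def)
qed

lemma Beta_prob:
  assumes "w \<ge> 1" "b \<ge> 1"
  shows "prob_space (Beta_distr (real w) (real b))"
proof (rule prob_spaceI)
  let ?B = "Beta_distr (real w) (real b)"
  have "emeasure ?B UNIV = (\<integral>\<^sup>+ x. ennreal (beta_density (real w) (real b) x) \<partial>lborel)"
    unfolding Beta_distr_def by (subst emeasure_density) (auto simp: beta_density_meas)
  also have "\<dots> = (\<integral>\<^sup>+ x. ennreal (beta_density (real w) (real b) x) * indicator {..1} x \<partial>lborel)"
  proof (intro nn_integral_cong)
    fix x :: real
    show "ennreal (beta_density (real w) (real b) x) = ennreal (beta_density (real w) (real b) x) * indicator {..1} x"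
    proof (cases "x \<le> 1")
      case False
      then have "beta_density (real w) (real b) x = 0" by (simp add: beta_density_def)
      then show ?thesis by simp
    qed simp
  qed
  also have "\<dots> = emeasure ?B {..1}"
    unfolding Beta_distr_def by (subst emeasure_density) (auto simp: beta_density_meas)
  also have "\<dots> = 1" using Beta_cdf[OF assms, of 1] bt_at1[of w "w+b-1"] assms by simp
  finally show "emeasure ?B (space ?B) = 1" by (simp add: Beta_distr_def)
qed



definition Gt :: "nat \<Rightarrow> nat \<Rightarrow> real \<Rightarrow> real" where
  "Gt w b y = bt (w+b-1) (max 0 (min 1 y)) w"

definition Xc :: "nat \<Rightarrow> nat \<Rightarrow> nat \<Rightarrow> real \<Rightarrow> nat" where
  "Xc w b n y = (LEAST k. Gt w b y \<le> Fc w b n k)"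

lemma Gt_cont: "continuous_on S (Gt w b)"
  unfolding Gt_def
  by (rule continuous_on_compose2[OF bt_cont[of UNIV]]) (auto intro!: continuous_intros)

lemma Gt_meas[measurable]: "Gt w b \<in> borel_measurable borel"
  by (rule borel_measurable_continuous_onI[OF Gt_cont])

lemma Gt_bounds: "0 \<le> Gt w b y \<and> Gt w b y \<le> 1"
  unfolding Gt_def by (rule bt_bounds) auto

lemma Xc_char: "Xc w b n y = k \<longleftrightarrow> Gt w b y \<le> Fc w b n k \<and> (k = 0 \<or> Fc w b n (k-1) < Gt w b y)"
proof -
  have ex: "Gt w b y \<le> Fc w b n (w+n)" using Fc_one[of w n "w+n" b] Gt_bounds[of w b y] by simp
  show ?thesis
  proof
    assume "Xc w b n y = k"
    then show "Gt w b y \<le> Fc w b n k \<and> (k = 0 \<or> Fc w b n (k-1) < Gt w b y)"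
      unfolding Xc_def using LeastI[of "\<lambda>k. Gt w b y \<le> Fc w b n k", OF ex]
        not_less_Least[of "k-1" "\<lambda>k. Gt w b y \<le> Fc w b n k"]
      by (metis diff_less less_numeral_extra(1) linorder_not_less neq0_conv)
  next
    assume a: "Gt w b y \<le> Fc w b n k \<and> (k = 0 \<or> Fc w b n (k-1) < Gt w b y)"
    show "Xc w b n y = k" unfolding Xc_def
    proof (rule Least_equality)
      show "Gt w b y \<le> Fc w b n k" using a by simp
      fix j assume j: "Gt w b y \<le> Fc w b n j"
      show "k \<le> j"
      proof (rule ccontr)
        assume "\<not> k \<le> j"
        then have "j \<le> k - 1" "k \<noteq> 0" by auto
        then show False using a j Fc_mono[of j "k-1" w b n] by auto
      qed
    qed
  qed
qed

lemma Gt_prob: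
  assumes w: "w \<ge> 1" and b: "b \<ge> 1" and v: "0 \<le> v" "v \<le> 1"
  shows "emeasure (Beta_distr (real w) (real b)) {y. Gt w b y \<le> v} = ennreal v"
proof (cases "v = 1")
  case True
  interpret prob_space "Beta_distr (real w) (real b)" by (rule Beta_prob[OF w b])
  have "{y. Gt w b y \<le> v} = space (Beta_distr (real w) (real b))"
    using True Gt_bounds by (auto simp: Beta_distr_def)
  then show ?thesis using True emeasure_space_1 by simp
next
  case False
  let ?K = "w+b-1"
  have wK: "1 \<le> w" "w \<le> ?K" using w b by auto
  obtain a where a: "0 \<le> a" "a \<le> 1" "bt ?K a w = v"
    using IVT'[of "\<lambda>t. bt ?K t w" 0 v 1] bt_at0[of w ?K] bt_at1[OF wK(2)] bt_cont v w by auto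
  have a1: "a < 1" using a False bt_at1[OF wK(2)] by (cases "a = 1") auto
  have set: "{y. Gt w b y \<le> v} = {..a}"
  proof (intro set_eqI iffI)
    fix y assume "y \<in> {y. Gt w b y \<le> v}"
    then have le: "bt ?K (max 0 (min 1 y)) w \<le> bt ?K a w" using a by (simp add: Gt_def)
    show "y \<in> {..a}"
    proof (rule ccontr)
      assume "y \<notin> {..a}"
      then have "a < max 0 (min 1 y)" using a a1 by auto
      then have "bt ?K a w < bt ?K (max 0 (min 1 y)) w"
        using bt_strict_mono[OF wK a(1)] by auto
      then show False using le by simp
    qed
  next
    fix y assume "y \<in> {..a}"
    then have "max 0 (min 1 y) \<le> a" using a by auto
    then have "bt ?K (max 0 (min 1 y)) w \<le> bt ?K a w" using bt_mono[OF wK _ _ a(2)] by auto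
    then show "y \<in> {y. Gt w b y \<le> v}" using a by (simp add: Gt_def)
  qed
  show ?thesis unfolding set Beta_cdf[OF w b] using a by simp
qed

lemma sets_Beta[simp]: "sets (Beta_distr a b) = sets borel"
  by (simp add: Beta_distr_def)

lemma space_Beta[simp]: "space (Beta_distr a b) = UNIV"
  by (simp add: Beta_distr_def)

lemma Xc_meas: "Xc w b n \<in> borel \<rightarrow>\<^sub>M count_space UNIV"
proof (subst measurable_count_space_eq2_countable, safe)
  fix k
  have "Xc w b n -` {k} = {y. Gt w b y \<le> Fc w b n k \<and> (k = 0 \<or> Fc w b n (k-1) < Gt w b y)}"
    unfolding vimage_def by (simp only: singleton_iff Xc_char)
  also have "\<dots> \<in> sets borel" by measurable
  finally show "Xc w b n -` {k} \<inter> space borel \<in> sets borel" by simp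
qed simp

lemma Xc_meas': "Xc w b n \<in> Beta_distr a c \<rightarrow>\<^sub>M count_space UNIV"
  using Xc_meas by (simp add: measurable_cong_sets[OF sets_Beta refl])

lemma Xc_distr:
  assumes w: "w \<ge> 1" and b: "b \<ge> 1"
  shows "distr (Beta_distr (real w) (real b)) (count_space UNIV) (Xc w b n) = measure_pmf (Pclas b w n)"
proof (rule measure_eqI_countable[where A=UNIV])
  fix k :: nat
  let ?B = "Beta_distr (real w) (real b)"
  interpret prob_space ?B by (rule Beta_prob[OF w b])
  have e: "emeasure (distr ?B (count_space UNIV) (Xc w b n)) {k} = emeasure ?B (Xc w b n -` {k})"
    by (subst emeasure_distr[OF Xc_meas']) auto
  have pm: "emeasure (measure_pmf (Pclas b w n)) {k} = ennreal (pmf (Pclas b w n) k)"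
    by (simp add: emeasure_pmf_single)
  show "emeasure (distr ?B (count_space UNIV) (Xc w b n)) {k} = emeasure (measure_pmf (Pclas b w n)) {k}"
  proof (cases k)
    case 0
    have "Xc w b n -` {k} = {y. Gt w b y \<le> Fc w b n 0}"
      unfolding vimage_def by (simp add: Xc_char 0)
    then have "emeasure ?B (Xc w b n -` {k}) = ennreal (Fc w b n 0)"
      using Gt_prob[OF w b Fc_nonneg Fc_le1] by simp
    then show ?thesis using e pm 0 by (simp add: Fc_def)
  next
    case (Suc j)
    have "Xc w b n -` {k} = {y. Gt w b y \<le> Fc w b n k} - {y. Gt w b y \<le> Fc w b n j}"
      unfolding vimage_def by (auto simp: Xc_char Suc)
    moreover have "{y. Gt w b y \<le> Fc w b n j} \<subseteq> {y. Gt w b y \<le> Fc w b n k}"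
      using Fc_mono[of j k w b n] Suc by auto
    moreover have "{y. Gt w b y \<le> Fc w b n j} \<in> sets ?B" "{y. Gt w b y \<le> Fc w b n k} \<in> sets ?B"
      by simp_all
    ultimately have "emeasure ?B (Xc w b n -` {k}) =
        emeasure ?B {y. Gt w b y \<le> Fc w b n k} - emeasure ?B {y. Gt w b y \<le> Fc w b n j}"
      by (simp add: emeasure_Diff)
    also have "\<dots> = ennreal (Fc w b n k - Fc w b n j)"
      using Gt_prob[OF w b Fc_nonneg Fc_le1] by (simp add: ennreal_minus Fc_nonneg)
    also have "Fc w b n k - Fc w b n j = pmf (Pclas b w n) k"
      using Suc by (simp add: Fc_def)
    finally show ?thesis using e pm by simp
  qed
qed auto

lemma c_bound:
  assumes "w \<ge> 1" "b \<ge> 1"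
  shows "2 * (real w + real b - 1) + 1 \<le> real b * (4 * real w + real b + 1) / 2"
proof (cases "b = 1")
  case True
  then show ?thesis by simp
next
  case False
  then have b2: "real b \<ge> 2" using assms by simp
  have h1: "0 \<le> real w * (real b - 1)" using assms by simp
  have h2: "0 \<le> (real b - 1) * (real b - 2)" using b2 by simp
  show ?thesis using h1 h2 by (simp add: algebra_simps)
qed

lemma bound_pt:
  assumes w: "w \<ge> 1" and b: "b \<ge> 1" and n: "n > 0" and y: "0 < y" "y < 1"
  shows "\<bar>real (Xc w b n y) - real n * y\<bar> < real b * (4 * real w + real b + 1) / 2"
proof -
  define k where "k = Xc w b n y"
  define c where "c = real b * (4 * real w + real b + 1) / 2"
  define K where "K = w + b - 1"
  have G: "Gt w b y = bt K y w" using y by (simp add: Gt_def K_def)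
  have ch: "bt K y w \<le> Fc w b n k" "k \<noteq> 0 \<Longrightarrow> Fc w b n (k-1) < bt K y w"
    using Xc_char[of w b n y k] G by (auto simp: k_def)
  have cK: "2 * (real w + real b - 1) + 1 \<le> c" using c_bound[OF w b] by (simp add: c_def)
  have wK: "1 \<le> w" "w \<le> K" using w b by (auto simp: K_def)
  have up: "real n * y - real k < c"
  proof (rule ccontr)
    assume "\<not> real n * y - real k < c"
    moreover have "real w \<ge> 1" "real b \<ge> 1" using w b by simp_all
    ultimately have "real k < real n * y" using cK by (smt (verit))
    define p0 where "p0 = real k / real n"
    have p0: "0 \<le> p0" "p0 < y" using n \<open>real k < real n * y\<close> by (auto simp: p0_def divide_simps mult.commute)
    have p01: "p0 \<le> 1" using p0 y by simp
    have "Fc w b n k \<le> bt (w+b-1) p0 w"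
      by (rule upper_dom) (use p0 p01 y n in \<open>auto simp: p0_def\<close>)
    also have "\<dots> < bt K y w" using bt_strict_mono[OF wK p0(1) p0(2)] y by (simp add: K_def)
    finally show False using ch(1) by simp
  qed
  have lo: "real k - real n * y < c"
  proof (rule ccontr)
    assume "\<not> real k - real n * y < c"
    then have kc: "real k \<ge> c + real n * y" by simp
    have ny: "0 \<le> real n * y" using y by simp
    have "real w \<ge> 1" "real b \<ge> 1" using w b by simp_all
    then have k1: "k \<noteq> 0" using kc cK ny by (cases k) auto
    have rk: "real (k-1) = real k - 1" using k1 by (cases k) auto
    have yK: "y * (real w + real b - 1) \<le> real w + real b - 1"
      using y w b by (intro mult_left_le_one_le) auto
    have "y * (real n + real w + real b - 1) + (real w + real b - 1) \<le> real (k-1)"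
      using kc cK yK rk by (simp add: algebra_simps)
    then have "bt (w+b-1) y w \<le> Fc w b n (k-1)"
      by (intro lower_dom) (use y in auto)
    then show False using ch(2)[OF k1] by (simp add: K_def)
  qed
  have "\<bar>real k - real n * y\<bar> < c" using up lo by (simp add: abs_less_iff)
  then show ?thesis by (simp add: k_def c_def)
qed

theorem lemma3p2:
  fixes b w n :: nat
  assumes "b > 0" and "w > 0" and "n > 0"
  shows "\<exists>M :: (nat \<times> real) measure.
           prob_space M \<and>
           sets M = sets (count_space UNIV \<Otimes>\<^sub>M lborel) \<and>
           distr M (count_space UNIV) fst = measure_pmf (Pclas b w n) \<and>
           distr M lborel snd = Beta_distr (real w) (real b) \<and>
           (AE p in M. \<bar>real (fst p) - real n * snd p\<bar>
                         < real b * (4 * real w + real b + 1) / 2)"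
proof -
  have w: "w \<ge> 1" and b: "b \<ge> 1" using assms by auto
  let ?B = "Beta_distr (real w) (real b)"
  let ?g = "\<lambda>y. (Xc w b n y, y)"
  let ?N = "count_space UNIV \<Otimes>\<^sub>M (lborel :: real measure)"
  define M where "M = distr ?B ?N ?g"
  interpret B: prob_space ?B by (rule Beta_prob[OF w b])
  have idm: "(\<lambda>y. y) \<in> ?B \<rightarrow>\<^sub>M (lborel :: real measure)"
    by (rule measurable_ident_sets) simp
  have gm: "?g \<in> ?B \<rightarrow>\<^sub>M ?N"
    by (rule measurable_Pair[OF Xc_meas' idm])
  have "prob_space M" unfolding M_def by (rule B.prob_space_distr[OF gm])
  moreover have "sets M = sets ?N" by (simp add: M_def)
  moreover have "distr M (count_space UNIV) fst = measure_pmf (Pclas b w n)"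
  proof -
    have "distr M (count_space UNIV) fst = distr ?B (count_space UNIV) (fst \<circ> ?g)"
      unfolding M_def by (rule distr_distr[OF measurable_fst gm])
    also have "fst \<circ> ?g = Xc w b n" by (simp add: o_def)
    finally show ?thesis using Xc_distr[OF w b] by simp
  qed
  moreover have "distr M lborel snd = ?B"
  proof -
    have "distr M lborel snd = distr ?B lborel (snd \<circ> ?g)"
      unfolding M_def by (rule distr_distr[OF measurable_snd gm])
    also have "snd \<circ> ?g = (\<lambda>y. y)" by (simp add: o_def)
    finally show ?thesis by (simp add: distr_id2)
  qed
  moreover have "AE p in M. \<bar>real (fst p) - real n * snd p\<bar> < real b * (4 * real w + real b + 1) / 2"
  proof -
    have P: "{p \<in> space ?N. \<bar>real (fst p) - real n * snd p\<bar> < real b * (4 * real w + real b + 1) / 2} \<in> sets ?N"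
      by measurable
    have "AE y in ?B. \<bar>real (Xc w b n y) - real n * y\<bar> < real b * (4 * real w + real b + 1) / 2"
      unfolding Beta_distr_def
    proof (subst AE_density)
      show "(\<lambda>x. ennreal (beta_density (real w) (real b) x)) \<in> borel_measurable lborel" by simp
      show "AE x in lborel. 0 < ennreal (beta_density (real w) (real b) x) \<longrightarrow>
          \<bar>real (Xc w b n x) - real n * x\<bar> < real b * (4 * real w + real b + 1) / 2"
      proof (rule AE_I2, rule impI)
        fix x :: real assume "0 < ennreal (beta_density (real w) (real b) x)"
        then have "0 < x" "x < 1" unfolding beta_density_def by (auto split: if_splits)
        then show "\<bar>real (Xc w b n x) - real n * x\<bar> < real b * (4 * real w + real b + 1) / 2"
          using bound_pt[OF w b assms(3)] by simp
      qed
    qed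
    then show ?thesis unfolding M_def by (subst AE_distr_iff[OF gm P]) simp
  qed
  ultimately show ?thesis by blast
qed

end
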